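(* Let $|\mu\rangle,|\bar\mu\rangle\in\mathbb{C}^2\otimes\mathbb{C}^2$ be two-qubit states with squared Schmidt coefficients $\left(\frac{1}{1+a},\frac{a}{1+a}\right)$ and $\left(\frac{1}{1+\bar a},\frac{\bar a}{1+\bar a}\right)$ respectively, where $a,\bar a\in(0,1)$ and $a>\bar a$. Let $d\ge 3$ be odd. The following are equivalent: (i) there exist states $|\lambda\rangle,|\bar\lambda\rangle\in\mathbb{C}^d\otimes\mathbb{C}^d$ of full Schmidt rank $d$ such that $|\mu\rangle\otimes|\lambda\rangle$ can be transformed into $|\bar\mu\rangle\otimes|\bar\lambda\rangle$ by a local unitary; (ii) $\bar a=a^{d_1/d_2}$ for two odd natural numbers $d_1,d_2$ with $d\ge d_1>d_2\ge 1$.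
   Context: The state $|\mu\rangle\otimes|\lambda\rangle$ is regarded as a bipartite state between two parties, each holding a $2$-dimensional and a $d$-dimensional subsystem. A local unitary is $U_A\otimes U_B$ with $U_A,U_B\in\mathrm{U}(2d)$, each acting jointly on the corresponding party's two subsystems. *)

theory Defs
  imports Complex_Main
begin

text \<open>A bipartite pure state on C^m (x) C^n is represented by its coefficient
 matrix C, psi = sum_{i<m, j<n} C i j |i>|j>. Only entries with i<m, j<n matter.\<close>

type_synonym cmat = "nat \<Rightarrow> nat \<Rightarrow> complex"

definition is_state :: "nat \<Rightarrow> nat \<Rightarrow> cmat \<Rightarrow> bool" where
  "is_state m n C \<longleftrightarrow> (\<Sum>i<m. \<Sum>j<n. (cmod (C i j))\<^sup>2) = 1"

definition unitary :: "nat \<Rightarrow> cmat \<Rightarrow> bool" where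
  "unitary n U \<longleftrightarrow> (\<forall>i<n. \<forall>j<n. (\<Sum>k<n. cnj (U k i) * U k j) = (if i = j then 1 else 0))"

definition local_apply :: "nat \<Rightarrow> nat \<Rightarrow> cmat \<Rightarrow> cmat \<Rightarrow> cmat \<Rightarrow> cmat" where
  "local_apply m n UA UB C = (\<lambda>i j. \<Sum>k<m. \<Sum>l<n. UA i k * UB j l * C k l)"

text \<open>Schmidt decomposition of a state on C^d (x) C^d with squared Schmidt
 coefficients p 0, ..., p (d-1):  psi = sum_k sqrt(p k) (U e_k) (x) (V e_k)
 with U, V unitary (i.e. orthonormal bases).\<close>
definition schmidt_sq :: "nat \<Rightarrow> cmat \<Rightarrow> (nat \<Rightarrow> real) \<Rightarrow> bool" where
  "schmidt_sq d C p \<longleftrightarrow> (\<forall>k<d. p k \<ge> 0) \<and>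
     (\<exists>U V. unitary d U \<and> unitary d V \<and>
        (\<forall>i<d. \<forall>j<d. C i j = (\<Sum>k<d. U i k * complex_of_real (sqrt (p k)) * V j k)))"

definition full_schmidt_rank :: "nat \<Rightarrow> cmat \<Rightarrow> bool" where
  "full_schmidt_rank d C \<longleftrightarrow> (\<exists>p. schmidt_sq d C p \<and> (\<forall>k<d. p k > 0))"

text \<open>Coefficient matrix of |mu> (x) |lambda> (mu on C^m (x) C^m, lambda on C^n (x) C^n)
 regarded as a bipartite state on C^(mn) (x) C^(mn), party A holding index (i,k)
 encoded as i*n+k.\<close>
definition kron :: "nat \<Rightarrow> cmat \<Rightarrow> cmat \<Rightarrow> cmat" where
  "kron n M L = (\<lambda>r c. M (r div n) (c div n) * L (r mod n) (c mod n))"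

end

theory Submission
  imports Defs "HOL-Library.Multiset" "HOL-Combinatorics.Permutations" "Jordan_Normal_Form.Determinant"
begin

definition mm :: "nat \<Rightarrow> cmat \<Rightarrow> cmat \<Rightarrow> cmat" where
  "mm n A B = (\<lambda>i j. \<Sum>k<n. A i k * B k j)"
definition schm :: "nat \<Rightarrow> cmat \<Rightarrow> cmat \<Rightarrow> (nat \<Rightarrow> real) \<Rightarrow> cmat \<Rightarrow> bool" where
  "schm n C A \<sigma> B \<longleftrightarrow> (\<forall>i<n. \<forall>j<n. C i j = (\<Sum>k<n. A i k * complex_of_real (\<sigma> k) * B j k))"
definition gram :: "nat \<Rightarrow> cmat \<Rightarrow> cmat" where
  "gram n C = (\<lambda>i j. \<Sum>c<n. C i c * cnj (C j c))"
definition idm :: cmat where "idm = (\<lambda>i j. if i = j then 1 else 0)"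
fun mp :: "nat \<Rightarrow> cmat \<Rightarrow> nat \<Rightarrow> cmat" where
  "mp n G 0 = idm"
| "mp n G (Suc k) = mm n G (mp n G k)"
definition tr :: "nat \<Rightarrow> cmat \<Rightarrow> complex" where "tr n G = (\<Sum>i<n. G i i)"

lemma unitaryD: "unitary n U \<Longrightarrow> i < n \<Longrightarrow> j < n \<Longrightarrow> (\<Sum>k<n. cnj (U k i) * U k j) = (if i = j then 1 else 0)"
  unfolding unitary_def by blast

lemma sum3_swap: "(\<Sum>c\<in>C. \<Sum>k\<in>K. \<Sum>l\<in>L. f c k l) = (\<Sum>k\<in>K. \<Sum>l\<in>L. \<Sum>c\<in>C. f c k l)"
proof -
  have "(\<Sum>c\<in>C. \<Sum>k\<in>K. \<Sum>l\<in>L. f c k l) = (\<Sum>k\<in>K. \<Sum>c\<in>C. \<Sum>l\<in>L. f c k l)"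
    by (rule sum.swap)
  also have "\<dots> = (\<Sum>k\<in>K. \<Sum>l\<in>L. \<Sum>c\<in>C. f c k l)"
    by (rule sum.cong[OF refl], rule sum.swap)
  finally show ?thesis .
qed

lemma gram_schm:
  assumes S: "schm n C A \<sigma> B" and B: "unitary n B" and i: "i < n" and j: "j < n"
  shows "gram n C i j = (\<Sum>k<n. A i k * complex_of_real ((\<sigma> k)\<^sup>2) * cnj (A j k))"
proof -
  have "gram n C i j = (\<Sum>c<n. (\<Sum>k<n. A i k * complex_of_real (\<sigma> k) * B c k) * cnj (\<Sum>l<n. A j l * complex_of_real (\<sigma> l) * B c l))"
    unfolding gram_def using S i j unfolding schm_def by (intro sum.cong) auto
  also have "\<dots> = (\<Sum>c<n. \<Sum>k<n. \<Sum>l<n. (A i k * complex_of_real (\<sigma> k) * cnj (A j l) * complex_of_real (\<sigma> l)) * (cnj (B c l) * B c k))"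
    apply (intro sum.cong refl)
    apply (subst cnj_sum)
    apply (subst sum_product)
    apply (intro sum.cong refl)
    by (simp add: mult_ac)
  also have "\<dots> = (\<Sum>k<n. \<Sum>l<n. (A i k * complex_of_real (\<sigma> k) * cnj (A j l) * complex_of_real (\<sigma> l)) * (\<Sum>c<n. cnj (B c l) * B c k))"
    apply (subst sum3_swap)
    by (simp add: sum_distrib_left)
  also have "\<dots> = (\<Sum>k<n. \<Sum>l<n. (A i k * complex_of_real (\<sigma> k) * cnj (A j l) * complex_of_real (\<sigma> l)) * (if l = k then 1 else 0))"
    by (intro sum.cong refl) (simp add: unitaryD[OF B])
  also have "\<dots> = (\<Sum>k<n. A i k * complex_of_real ((\<sigma> k)\<^sup>2) * cnj (A j k))"
    by (rule sum.cong[OF refl]) (simp add: if_distrib[of "\<lambda>x. _ * x"] sum.delta power2_eq_square cong: if_cong)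
  finally show ?thesis .
qed

lemma mp_box:
  assumes "\<forall>i<n. \<forall>j<n. G i j = G' i j" "i < n" "j < n"
  shows "mp n G k i j = mp n G' k i j"
  using assms(2,3)
proof (induction k arbitrary: i j)
  case 0 then show ?case by simp
next
  case (Suc k)
  show ?case using Suc assms(1) by (simp add: mm_def)
qed

lemma mp_diag:
  assumes A: "unitary n A" and k: "k \<ge> 1" and i: "i < n" and j: "j < n"
  shows "mp n (\<lambda>i j. \<Sum>l<n. A i l * f l * cnj (A j l)) k i j = (\<Sum>l<n. A i l * f l ^ k * cnj (A j l))"
  using k i j
proof (induction k arbitrary: i j)
  case 0 then show ?case by simp
next
  case (Suc m)
  show ?case
  proof (cases "m = 0")
    case True
    then show ?thesis using Suc.prems by (simp add: mm_def idm_def if_distrib[of "\<lambda>x. _ * x"] sum.delta' cong: if_cong)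
  next
    case False
    let ?K = "(\<lambda>i j. \<Sum>l<n. A i l * f l * cnj (A j l))"
    have "mp n ?K (Suc m) i j = (\<Sum>r<n. ?K i r * (\<Sum>l<n. A r l * f l ^ m * cnj (A j l)))"
      using Suc False by (simp add: mm_def)
    also have "\<dots> = (\<Sum>r<n. \<Sum>l'<n. \<Sum>l<n. (A i l' * f l' * f l ^ m * cnj (A j l)) * (cnj (A r l') * A r l))"
      apply (rule sum.cong[OF refl])
      apply (subst sum_product)
      by (simp add: mult_ac)
    also have "\<dots> = (\<Sum>l'<n. \<Sum>l<n. (A i l' * f l' * f l ^ m * cnj (A j l)) * (\<Sum>r<n. cnj (A r l') * A r l))"
      by (subst sum3_swap) (simp add: sum_distrib_left)
    also have "\<dots> = (\<Sum>l'<n. \<Sum>l<n. (A i l' * f l' * f l ^ m * cnj (A j l)) * (if l' = l then 1 else 0))"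
      by (intro sum.cong refl) (simp add: unitaryD[OF A])
    also have "\<dots> = (\<Sum>l<n. A i l * f l ^ Suc m * cnj (A j l))"
      by (rule sum.cong[OF refl]) (simp add: if_distrib[of "\<lambda>x. _ * x"] sum.delta mult_ac cong: if_cong)
    finally show ?thesis .
  qed
qed

lemma tr_diag:
  assumes A: "unitary n A"
  shows "tr n (\<lambda>i j. \<Sum>l<n. A i l * g l * cnj (A j l)) = (\<Sum>l<n. g l)"
proof -
  have "tr n (\<lambda>i j. \<Sum>l<n. A i l * g l * cnj (A j l)) = (\<Sum>i<n. \<Sum>l<n. g l * (cnj (A i l) * A i l))"
    unfolding tr_def by (simp add: mult_ac)
  also have "\<dots> = (\<Sum>l<n. g l * (\<Sum>i<n. cnj (A i l) * A i l))"
    by (subst sum.swap) (simp add: sum_distrib_left)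
  also have "\<dots> = (\<Sum>l<n. g l)"
    by (rule sum.cong[OF refl]) (simp add: unitaryD[OF A])
  finally show ?thesis .
qed

lemma power_sum_schm:
  assumes S: "schm n C A \<sigma> B" and A: "unitary n A" and B: "unitary n B" and k: "k \<ge> 1"
  shows "tr n (mp n (gram n C) k) = (\<Sum>l<n. complex_of_real ((\<sigma> l)\<^sup>2) ^ k)"
proof -
  let ?K = "(\<lambda>i j. \<Sum>l<n. A i l * complex_of_real ((\<sigma> l)\<^sup>2) * cnj (A j l))"
  have "tr n (mp n (gram n C) k) = tr n (mp n ?K k)"
    unfolding tr_def by (rule sum.cong[OF refl], rule mp_box) (auto simp: gram_schm[OF S B])
  also have "\<dots> = tr n (\<lambda>i j. \<Sum>l<n. A i l * complex_of_real ((\<sigma> l)\<^sup>2) ^ k * cnj (A j l))"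
    unfolding tr_def by (rule sum.cong[OF refl]) (simp add: mp_diag[OF A k])
  also have "\<dots> = (\<Sum>l<n. complex_of_real ((\<sigma> l)\<^sup>2) ^ k)"
    by (rule tr_diag[OF A])
  finally show ?thesis .
qed

lemma sum_prod3: "(\<Sum>k\<in>A. \<Sum>l\<in>B. f k * s * g l) = (\<Sum>k\<in>A. f k) * (s::'a::comm_ring_1) * (\<Sum>l\<in>B. g l)"
  by (simp add: sum_product sum_distrib_left sum_distrib_right mult_ac)

lemma sum_split_prod: fixes m d :: nat and f :: "nat \<Rightarrow> 'a::comm_monoid_add" shows "(\<Sum>K<m*d. f K) = (\<Sum>k<m. \<Sum>j<d. f (k*d+j))"
proof (induction m)
  case 0 then show ?case by simp
next
  case (Suc m)
  have "(\<Sum>K<Suc m*d. f K) = (\<Sum>K<m*d. f K) + (\<Sum>K\<in>{m*d..<m*d+d}. f K)"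
    by (simp add: sum.atLeastLessThan_concat[symmetric] lessThan_atLeast0 add.commute)
  also have "(\<Sum>K\<in>{m*d..<m*d+d}. f K) = (\<Sum>j<d. f (m*d+j))"
    using sum.shift_bounds_nat_ivl[of f 0 "m*d" d] by (simp add: lessThan_atLeast0 add.commute)
  finally show ?case using Suc by simp
qed

lemma unitary_mm:
  assumes U: "unitary n U" and A: "unitary n A"
  shows "unitary n (mm n U A)"
  unfolding unitary_def
proof (intro allI impI)
  fix i j assume i: "i < n" and j: "j < n"
  have "(\<Sum>r<n. cnj (mm n U A r i) * mm n U A r j) = (\<Sum>r<n. \<Sum>k<n. \<Sum>k'<n. (cnj (A k i) * A k' j) * (cnj (U r k) * U r k'))"
    unfolding mm_def
    apply (rule sum.cong[OF refl])
    apply (subst cnj_sum)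
    apply (subst sum_product)
    by (simp add: mult_ac)
  also have "\<dots> = (\<Sum>k<n. \<Sum>k'<n. (cnj (A k i) * A k' j) * (\<Sum>r<n. cnj (U r k) * U r k'))"
    by (subst sum3_swap) (simp add: sum_distrib_left)
  also have "\<dots> = (\<Sum>k<n. \<Sum>k'<n. (cnj (A k i) * A k' j) * (if k = k' then 1 else 0))"
    by (intro sum.cong refl) (simp add: unitaryD[OF U])
  also have "\<dots> = (\<Sum>k<n. cnj (A k i) * A k j)"
    by (rule sum.cong[OF refl]) (simp add: if_distrib[of "\<lambda>x. _ * x"] sum.delta cong: if_cong)
  also have "\<dots> = (if i = j then 1 else 0)" by (simp add: unitaryD[OF A i j])
  finally show "(\<Sum>r<n. cnj (mm n U A r i) * mm n U A r j) = (if i = j then 1 else 0)" .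
qed

lemma lu_schm:
  assumes S: "schm n C A \<sigma> B"
    and L: "\<forall>r<n. \<forall>c<n. local_apply n n UA UB C r c = C' r c"
  shows "schm n C' (mm n UA A) \<sigma> (mm n UB B)"
  unfolding schm_def
proof (intro allI impI)
  fix r c assume r: "r < n" and c: "c < n"
  have "C' r c = (\<Sum>k<n. \<Sum>l<n. UA r k * UB c l * (\<Sum>K<n. A k K * complex_of_real (\<sigma> K) * B l K))"
    using L r c S unfolding local_apply_def schm_def by (auto intro!: sum.cong)
  also have "\<dots> = (\<Sum>k<n. \<Sum>l<n. \<Sum>K<n. (UA r k * A k K) * complex_of_real (\<sigma> K) * (UB c l * B l K))"
    by (simp add: sum_distrib_left mult_ac)
  also have "\<dots> = (\<Sum>K<n. \<Sum>k<n. \<Sum>l<n. (UA r k * A k K) * complex_of_real (\<sigma> K) * (UB c l * B l K))"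
    by (subst sum3_swap[symmetric]) simp
  also have "\<dots> = (\<Sum>K<n. mm n UA A r K * complex_of_real (\<sigma> K) * mm n UB B c K)"
    unfolding mm_def
    by (rule sum.cong[OF refl], rule sum_prod3)
  finally show "C' r c = (\<Sum>K<n. mm n UA A r K * complex_of_real (\<sigma> K) * mm n UB B c K)" .
qed

definition kronm :: "nat \<Rightarrow> cmat \<Rightarrow> cmat \<Rightarrow> cmat" where
  "kronm d U1 U2 = (\<lambda>r K. U1 (r div d) (K div d) * U2 (r mod d) (K mod d))"

lemma unitary_kron:
  assumes U1: "unitary m U1" and U2: "unitary d U2"
  shows "unitary (m*d) (kronm d U1 U2)"
  unfolding unitary_def
proof (intro allI impI)
  fix K K' assume K: "K < m*d" and K': "K' < m*d"
  then have d: "d > 0" by (cases d) auto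
  have Kd: "K div d < m" "K' div d < m" using K K' by (auto simp: less_mult_imp_div_less)
  have Km: "K mod d < d" "K' mod d < d" using d by auto
  have "(\<Sum>r<m*d. cnj (kronm d U1 U2 r K) * kronm d U1 U2 r K') =
     (\<Sum>i<m. \<Sum>j<d. (cnj (U1 i (K div d)) * U1 i (K' div d)) * (cnj (U2 j (K mod d)) * U2 j (K' mod d)))"
    unfolding sum_split_prod kronm_def
    by (intro sum.cong refl) (simp add: mult_ac)
  also have "\<dots> = (\<Sum>i<m. cnj (U1 i (K div d)) * U1 i (K' div d)) * (\<Sum>j<d. cnj (U2 j (K mod d)) * U2 j (K' mod d))"
    by (simp add: sum_product)
  also have "\<dots> = (if K div d = K' div d then 1 else 0) * (if K mod d = K' mod d then 1 else 0)"
    by (simp add: unitaryD[OF U1 Kd] unitaryD[OF U2 Km])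
  also have "\<dots> = (if K = K' then 1 else 0)"
  proof -
    have "K = K' \<longleftrightarrow> K div d = K' div d \<and> K mod d = K' mod d"
      by (metis div_mult_mod_eq)
    then show ?thesis by simp
  qed
  finally show "(\<Sum>r<m*d. cnj (kronm d U1 U2 r K) * kronm d U1 U2 r K') = (if K = K' then 1 else 0)" .
qed

lemma kron_schm:
  assumes S1: "schm m M U1 \<sigma>1 V1" and S2: "schm d L U2 \<sigma>2 V2"
  shows "schm (m*d) (kron d M L) (kronm d U1 U2) (\<lambda>K. \<sigma>1 (K div d) * \<sigma>2 (K mod d)) (kronm d V1 V2)"
  unfolding schm_def
proof (intro allI impI)
  fix r c assume r: "r < m*d" and c: "c < m*d"
  then have d: "d > 0" by (cases d) auto
  have rd: "r div d < m" "c div d < m" using r c by (auto simp: less_mult_imp_div_less)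
  have rm: "r mod d < d" "c mod d < d" using d by auto
  have "kron d M L r c = (\<Sum>k<m. U1 (r div d) k * complex_of_real (\<sigma>1 k) * V1 (c div d) k) *
        (\<Sum>k'<d. U2 (r mod d) k' * complex_of_real (\<sigma>2 k') * V2 (c mod d) k')"
    unfolding kron_def using S1 S2 rd rm unfolding schm_def by simp
  also have "\<dots> = (\<Sum>k<m. \<Sum>k'<d. (U1 (r div d) k * U2 (r mod d) k') * complex_of_real (\<sigma>1 k * \<sigma>2 k') * (V1 (c div d) k * V2 (c mod d) k'))"
    by (simp add: sum_product mult_ac)
  also have "\<dots> = (\<Sum>K<m*d. kronm d U1 U2 r K * complex_of_real (\<sigma>1 (K div d) * \<sigma>2 (K mod d)) * kronm d V1 V2 c K)"
    unfolding sum_split_prod kronm_def using d by simp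
  finally show "kron d M L r c = (\<Sum>K<m*d. kronm d U1 U2 r K * complex_of_real (\<sigma>1 (K div d) * \<sigma>2 (K mod d)) * kronm d V1 V2 c K)" .
qed

lemma exp_sum_zero:
  fixes W :: "real set" and c :: "real \<Rightarrow> real"
  shows "finite W \<Longrightarrow> (\<forall>w\<in>W. w > 0) \<longrightarrow> (\<forall>k\<ge>1. (\<Sum>w\<in>W. c w * w^k) = 0) \<longrightarrow> (\<forall>w\<in>W. c w = 0)"
proof (induction W rule: finite_linorder_max_induct)
  case empty then show ?case by simp
next
  case (insert b A)
  show ?case
  proof (intro impI)
    assume pos: "\<forall>w\<in>insert b A. 0 < w" and Z: "\<forall>k\<ge>1. (\<Sum>w\<in>insert b A. c w * w ^ k) = 0"
    have bA: "b \<notin> A" using insert(2) by auto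
    have b: "b > 0" using pos by auto
    have eq: "(\<Sum>w\<in>A. c w * w ^ k) = - c b * b ^ k" if "k \<ge> 1" for k
      using Z that insert(1) bA by (simp add: add_eq_0_iff)
    define f where "f k = c b + (\<Sum>w\<in>A. c w * (w/b) ^ Suc k)" for k
    have f0: "f k = 0" for k
    proof -
      have "(\<Sum>w\<in>A. c w * (w/b) ^ Suc k) = (\<Sum>w\<in>A. c w * w ^ Suc k) / b ^ Suc k"
        by (simp add: sum_divide_distrib power_divide)
      also have "\<dots> = - c b" using eq[of "Suc k"] b by simp
      finally show ?thesis unfolding f_def by simp
    qed
    have "(\<lambda>k. (\<Sum>w\<in>A. c w * (w/b) ^ Suc k)) \<longlonglongrightarrow> 0"
    proof (rule tendsto_null_sum)
      fix w assume w: "w \<in> A"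
      have "0 < w/b" "w/b < 1" using w pos b insert(2) by auto
      then have "(\<lambda>k. (w/b) ^ k) \<longlonglongrightarrow> 0" by (intro LIMSEQ_power_zero) auto
      then have "(\<lambda>k. (w/b) ^ Suc k) \<longlonglongrightarrow> 0" by (rule LIMSEQ_Suc)
      then show "(\<lambda>k. c w * (w/b) ^ Suc k) \<longlonglongrightarrow> 0" by (rule tendsto_mult_right_zero)
    qed
    then have "f \<longlonglongrightarrow> c b + 0" unfolding f_def by (intro tendsto_add) auto
    moreover have "f = (\<lambda>k. 0)" using f0 by (intro ext) simp
    then have "f \<longlonglongrightarrow> 0" by simp
    ultimately have cb: "c b = 0" using LIMSEQ_unique by fastforce
    have "\<forall>w\<in>A. c w = 0"
      using insert(3) pos eq cb by auto
    then show "\<forall>w\<in>insert b A. c w = 0" using cb by auto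
  qed
qed

lemma sum_by_value:
  fixes u :: "'a \<Rightarrow> real" and F :: "real \<Rightarrow> real"
  assumes "finite I" "finite W" "u ` I \<subseteq> W"
  shows "(\<Sum>i\<in>I. F (u i)) = (\<Sum>w\<in>W. F w * real (card {i\<in>I. u i = w}))"
proof -
  have "(\<Sum>i\<in>I. F (u i)) = (\<Sum>w\<in>u ` I. \<Sum>i\<in>{x\<in>I. u x = w}. F (u i))"
    by (rule sum.image_gen[OF assms(1)])
  also have "\<dots> = (\<Sum>w\<in>u ` I. F w * real (card {i\<in>I. u i = w}))"
    by (rule sum.cong[OF refl]) simp
  also have "\<dots> = (\<Sum>w\<in>W. F w * real (card {i\<in>I. u i = w}))"
    by (rule sum.mono_neutral_left[OF assms(2) assms(3)]) (auto simp: card_gt_0_iff)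
  finally show ?thesis .
qed

lemma ps_unique:
  fixes u :: "'a \<Rightarrow> real" and v :: "'b \<Rightarrow> real" and h :: "real \<Rightarrow> real"
  assumes I: "finite I" and J: "finite J" and u: "\<forall>i\<in>I. u i > 0" and v: "\<forall>j\<in>J. v j > 0"
    and P: "\<forall>k\<ge>1. (\<Sum>i\<in>I. u i ^ k) = (\<Sum>j\<in>J. v j ^ k)"
  shows "(\<Sum>i\<in>I. h (u i)) = (\<Sum>j\<in>J. h (v j))"
proof -
  let ?W = "u ` I \<union> v ` J"
  have W: "finite ?W" using I J by auto
  define c where "c w = real (card {i\<in>I. u i = w}) - real (card {j\<in>J. v j = w})" for w
  have pos: "\<forall>w\<in>?W. w > 0" using u v by auto
  have Z: "\<forall>k\<ge>1. (\<Sum>w\<in>?W. c w * w^k) = 0"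
    proof (intro allI impI)
      fix k :: nat assume k: "k \<ge> 1"
      have "(\<Sum>w\<in>?W. c w * w^k) = (\<Sum>w\<in>?W. w^k * real (card {i\<in>I. u i = w})) - (\<Sum>w\<in>?W. w^k * real (card {j\<in>J. v j = w}))"
        unfolding c_def by (simp add: sum_subtractf algebra_simps)
      also have "\<dots> = (\<Sum>i\<in>I. u i ^ k) - (\<Sum>j\<in>J. v j ^ k)"
        using sum_by_value[OF I W, of u "\<lambda>w. w^k"] sum_by_value[OF J W, of v "\<lambda>w. w^k"] by auto
      also have "\<dots> = 0" using P k by simp
      finally show "(\<Sum>w\<in>?W. c w * w^k) = 0" .
    qed
  have "\<forall>w\<in>?W. c w = 0" using exp_sum_zero[OF W] pos Z by blast
  then have "(\<Sum>w\<in>?W. h w * real (card {i\<in>I. u i = w})) = (\<Sum>w\<in>?W. h w * real (card {j\<in>J. v j = w}))"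
    unfolding c_def by (intro sum.cong) auto
  then show ?thesis
    using sum_by_value[OF I W, of u h] sum_by_value[OF J W, of v h] by auto
qed

lemma odd_pm_sum:
  fixes f :: "nat \<Rightarrow> int"
  assumes "\<forall>j<d. f j = 1 \<or> f j = -1"
  shows "odd (\<Sum>j<d. f j) \<longleftrightarrow> odd d"
  using assms
proof (induction d)
  case 0 then show ?case by simp
next
  case (Suc d)
  then have IH: "odd (\<Sum>j<d. f j) \<longleftrightarrow> odd d" by auto
  have "f d = 1 \<or> f d = -1" using Suc.prems by auto
  then show ?case using IH by auto
qed

lemma abs_pm_sum:
  fixes f :: "nat \<Rightarrow> int"
  assumes "\<forall>j<d. f j = 1 \<or> f j = -1"
  shows "\<bar>\<Sum>j<d. f j\<bar> \<le> int d"
proof -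
  have "\<bar>\<Sum>j<d. f j\<bar> \<le> (\<Sum>j<d. \<bar>f j\<bar>)" by (rule sum_abs)
  also have "\<dots> = (\<Sum>j<d. 1)" using assms by (intro sum.cong) auto
  finally show ?thesis by simp
qed

lemma coset_rep:
  fixes G :: "real set"
  assumes G0: "0 \<in> G" and Gadd: "\<And>x y. x \<in> G \<Longrightarrow> y \<in> G \<Longrightarrow> x + y \<in> G"
    and Gneg: "\<And>x. x \<in> G \<Longrightarrow> - x \<in> G"
  obtains R where "\<And>w. R w - w \<in> G" and "\<And>w g. g \<in> G \<Longrightarrow> R (w + g) = R w"
proof -
  define R where "R w = (SOME r. r - w \<in> G)" for w
  have 1: "R w - w \<in> G" for w unfolding R_def by (rule someI[of _ w]) (simp add: G0)
  have 2: "R (w + g) = R w" if g: "g \<in> G" for w g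
  proof -
    have "(\<lambda>r. r - (w + g) \<in> G) = (\<lambda>r. r - w \<in> G)"
    proof (rule ext, rule iffI)
      fix r assume "r - (w + g) \<in> G"
      then have "(r - (w + g)) + g \<in> G" using Gadd g by blast
      then show "r - w \<in> G" by simp
    next
      fix r assume "r - w \<in> G"
      then have "(r - w) + - g \<in> G" using Gadd Gneg g by blast
      then show "r - (w + g) \<in> G" by (simp add: algebra_simps)
    qed
    then show ?thesis unfolding R_def by simp
  qed
  show thesis using 1 2 that by blast
qed

definition sg :: "int \<Rightarrow> int" where "sg k = (if even k then 1 else -1)"

lemma sg_pm: "sg k = 1 \<or> sg k = -1" unfolding sg_def by auto

lemma sg_diff: "sg (k - j) = (if even j then sg k else - sg k)"
  unfolding sg_def by auto

lemma nt_main: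
  fixes s t :: real and l lb :: "nat \<Rightarrow> real" and d :: nat
  assumes s: "0 < s" and st: "s < t" and d: "odd d"
    and H: "\<And>h::real\<Rightarrow>real. (\<Sum>j<d. h (l j) + h (l j + s)) = (\<Sum>j<d. h (lb j) + h (lb j + t))"
  shows "\<exists>p q::nat. odd p \<and> odd q \<and> q \<le> d \<and> p < q \<and> p \<ge> 1 \<and> t = s * q / p"
proof (cases "t / s \<in> \<rat>")
  case True
  then obtain q p :: nat where p0: "p \<noteq> 0" and tsq: "\<bar>t / s\<bar> = real q / real p" and cop: "coprime q p"
    by (rule Rats_abs_nat_div_natE)
  have ts: "t / s = real q / real p" using tsq s st by simp
  have t_eq: "t = s * q / p" using ts s by (simp add: field_simps)
  have pq: "p < q"
  proof -
    have "1 < t / s" using s st by simp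
    then have "real p < real q" using p0 ts by (simp add: field_simps)
    then show ?thesis by simp
  qed
  define u where "u = s / p"
  have u0: "u \<noteq> 0" using s p0 unfolding u_def by simp
  have s_u: "s = of_int (int p) * u" using p0 unfolding u_def by simp
  have t_u: "t = of_int (int q) * u" using p0 t_eq unfolding u_def by simp
  let ?G = "range (\<lambda>k::int. of_int k * u)"
  have g0: "0 \<in> ?G" by (auto intro: image_eqI[of _ _ 0])
  have gadd: "x + y \<in> ?G" if xyG: "x \<in> ?G" "y \<in> ?G" for x y
  proof -
    obtain i j :: int where "x = of_int i * u" "y = of_int j * u" using xyG by auto
    then have "x + y = of_int (i + j) * u" by (simp add: algebra_simps)
    then show ?thesis by blast
  qed
  have gneg: "- x \<in> ?G" if xG: "x \<in> ?G" for x
  proof -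
    obtain i :: int where "x = of_int i * u" using xG by auto
    then have "- x = of_int (- i) * u" by simp
    then show ?thesis by blast
  qed
  obtain R where R1: "\<And>w. R w - w \<in> ?G" and R2: "\<And>w g. g \<in> ?G \<Longrightarrow> R (w + g) = R w"
    using coset_rep[of ?G, OF g0 gadd gneg] by blast
  define N where "N w = (THE k::int. R w = w + of_int k * u)" for w
  have N_eq: "R w = w + of_int (N w) * u" for w
  proof -
    obtain k :: int where k: "R w - w = of_int k * u" using R1[of w] by auto
    have uniq: "k' = k" if "R w = w + of_int k' * u" for k'
    proof -
      have "of_int k' * u = of_int k * u" using that k by simp
      then show ?thesis using u0 by simp
    qed
    have "R w = w + of_int (THE k::int. R w = w + of_int k * u) * u"
      by (rule theI[of "\<lambda>k::int. R w = w + of_int k * u" k]) (use k uniq in auto)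
    then show ?thesis unfolding N_def .
  qed
  have N_shift: "N (w + of_int (int j) * u) = N w - int j" for w j
  proof -
    have "R (w + of_int (int j) * u) = R w" by (rule R2) (rule rangeI)
    then have "w + of_int (int j) * u + of_int (N (w + of_int (int j) * u)) * u = w + of_int (N w) * u"
      using N_eq by metis
    then have "of_int (int j + N (w + of_int (int j) * u)) * u = of_int (N w) * u"
      by (simp add: algebra_simps)
    then have "int j + N (w + of_int (int j) * u) = N w" using u0 by simp
    then show ?thesis by simp
  qed
  have Ns: "N (w + s) = N w - int p" for w using N_shift[of w p] s_u by simp
  have Nt: "N (w + t) = N w - int q" for w using N_shift[of w q] t_u by simp
  define A where "A = (\<Sum>j<d. sg (N (l j)))"
  define B where "B = (\<Sum>j<d. sg (N (lb j)))"
  have Aodd: "odd A" unfolding A_def using d by (subst odd_pm_sum) (auto simp: sg_pm)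
  have Bodd: "odd B" unfolding B_def using d by (subst odd_pm_sum) (auto simp: sg_pm)
  have H1: "(\<Sum>j<d. of_int (sg (N (l j))) + of_int (sg (N (l j + s)))) = (\<Sum>j<d. of_int (sg (N (lb j))) + (of_int (sg (N (lb j + t))) :: real))"
    by (rule H)
  have podd: "odd p"
  proof (rule ccontr)
    assume "\<not> odd p"
    then have pe: "even p" by simp
    have qo: "odd q"
    proof
      assume "even q"
      then have "(2::nat) = 1" using coprime_common_divisor_nat[OF cop] pe by blast
      then show False by simp
    qed
    have "(\<Sum>j<d. of_int (sg (N (l j))) + of_int (sg (N (l j + s)))) = (2::real) * of_int A"
      unfolding A_def by (simp add: Ns sg_diff pe sum_distrib_left)
    moreover have "(\<Sum>j<d. of_int (sg (N (lb j))) + (of_int (sg (N (lb j + t))) :: real)) = 0"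
      by (simp add: Nt sg_diff qo)
    ultimately have "A = 0" using H1 by simp
    then show False using Aodd by simp
  qed
  have qodd: "odd q"
  proof (rule ccontr)
    assume "\<not> odd q"
    then have qe: "even q" by simp
    have "(\<Sum>j<d. of_int (sg (N (lb j))) + (of_int (sg (N (lb j + t))) :: real)) = (2::real) * of_int B"
      unfolding B_def by (simp add: Nt sg_diff qe sum_distrib_left)
    moreover have "(\<Sum>j<d. of_int (sg (N (l j))) + (of_int (sg (N (l j + s))) :: real)) = 0"
      by (simp add: Ns sg_diff podd)
    ultimately have "B = 0" using H1 by simp
    then show False using Bodd by simp
  qed
  have H2: "(\<Sum>j<d. of_int (N (l j) * sg (N (l j))) + of_int (N (l j + s) * sg (N (l j + s)))) =
            (\<Sum>j<d. of_int (N (lb j) * sg (N (lb j))) + (of_int (N (lb j + t) * sg (N (lb j + t))) :: real))"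
    by (rule H)
  have "(\<Sum>j<d. of_int (N (l j) * sg (N (l j))) + of_int (N (l j + s) * sg (N (l j + s)))) = (of_int (int p * A) :: real)"
  proof -
    have T: "N (l j) * sg (N (l j)) + N (l j + s) * sg (N (l j + s)) = int p * sg (N (l j))" for j
      by (simp only: Ns) (simp add: sg_diff podd algebra_simps)
    have "(\<Sum>j<d. of_int (N (l j) * sg (N (l j))) + of_int (N (l j + s) * sg (N (l j + s)))) = (of_int (\<Sum>j<d. N (l j) * sg (N (l j)) + N (l j + s) * sg (N (l j + s))) :: real)"
      by simp
    also have "\<dots> = of_int (int p * A)" unfolding T A_def by (simp add: sum_distrib_left)
    finally show ?thesis .
  qed
  moreover have "(\<Sum>j<d. of_int (N (lb j) * sg (N (lb j))) + (of_int (N (lb j + t) * sg (N (lb j + t))) :: real)) = of_int (int q * B)"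
  proof -
    have T: "N (lb j) * sg (N (lb j)) + N (lb j + t) * sg (N (lb j + t)) = int q * sg (N (lb j))" for j
      by (simp only: Nt) (simp add: sg_diff qodd algebra_simps)
    have "(\<Sum>j<d. of_int (N (lb j) * sg (N (lb j))) + of_int (N (lb j + t) * sg (N (lb j + t)))) = (of_int (\<Sum>j<d. N (lb j) * sg (N (lb j)) + N (lb j + t) * sg (N (lb j + t))) :: real)"
      by simp
    also have "\<dots> = of_int (int q * B)" unfolding T B_def by (simp add: sum_distrib_left)
    finally show ?thesis .
  qed
  ultimately have pAqB: "int p * A = int q * B" using H2 by (simp only: of_int_eq_iff)
  have "int q dvd int p * A" using pAqB by simp
  moreover have "coprime (int q) (int p)" using cop by simp
  ultimately have "int q dvd A" using coprime_dvd_mult_right_iff by blast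
  moreover have "A \<noteq> 0" using Aodd by auto
  ultimately have "\<bar>int q\<bar> \<le> \<bar>A\<bar>" using dvd_imp_le_int by blast
  then have "int q \<le> \<bar>A\<bar>" by simp
  also have "\<bar>A\<bar> \<le> int d" unfolding A_def by (rule abs_pm_sum) (auto simp: sg_pm)
  finally have "q \<le> d" by simp
  then show ?thesis using podd qodd pq p0 t_eq by (intro exI[of _ p] exI[of _ q]) auto
next
  case False
  let ?G = "{of_int i * s + of_int j * t | i j :: int. True}"
    have g0: "0 \<in> ?G" by (auto intro!: exI[of _ 0])
    have gadd: "x + y \<in> ?G" if xyG: "x \<in> ?G" "y \<in> ?G" for x y
    proof -
      obtain i j i' j' :: int where "x = of_int i * s + of_int j * t" "y = of_int i' * s + of_int j' * t"
        using xyG by auto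
      then have "x + y = of_int (i + i') * s + of_int (j + j') * t" by (simp add: algebra_simps)
      then show ?thesis by blast
    qed
    have gneg: "- x \<in> ?G" if xG: "x \<in> ?G" for x
    proof -
      obtain i j :: int where "x = of_int i * s + of_int j * t" using xG by auto
      then have "- x = of_int (- i) * s + of_int (- j) * t" by (simp add: algebra_simps)
      then show ?thesis by blast
    qed
  obtain R where R1: "\<And>w. R w - w \<in> ?G" and R2: "\<And>w g. g \<in> ?G \<Longrightarrow> R (w + g) = R w"
    using coset_rep[of ?G, OF g0 gadd gneg] by blast
  have uniq: "j = j'" if "of_int i * s + of_int j * t = of_int i' * s + of_int j' * t" for i j i' j' :: int
  proof (rule ccontr)
    assume "j \<noteq> j'"
    then have "of_int (j - j') * t = of_int (i' - i) * s" using that by (simp add: algebra_simps)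
    then have "t / s = of_int (i' - i) / of_int (j - j')" using \<open>j \<noteq> j'\<close> s by (simp add: field_simps)
    then have "t / s \<in> \<rat>" by simp
    then show False using False by simp
  qed
  define N where "N w = (THE j::int. \<exists>i::int. R w = w + of_int i * s + of_int j * t)" for w
  have N_eq: "\<exists>i::int. R w = w + of_int i * s + of_int (N w) * t" for w
  proof -
    obtain i j :: int where k: "R w - w = of_int i * s + of_int j * t" using R1[of w] by auto
    have "\<exists>i::int. R w = w + of_int i * s + of_int (THE j::int. \<exists>i::int. R w = w + of_int i * s + of_int j * t) * t"
    proof (rule theI[of "\<lambda>j::int. \<exists>i::int. R w = w + of_int i * s + of_int j * t" j])
      show "\<exists>i::int. R w = w + of_int i * s + of_int j * t" using k by (intro exI[of _ i]) simp
      show "x = j" if xx: "\<exists>i::int. R w = w + of_int i * s + of_int x * t" for x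
      proof -
        obtain i' where "R w = w + of_int i' * s + of_int x * t" using xx by auto
        then have "of_int i' * s + of_int x * t = of_int i * s + of_int j * t" using k by simp
        then show ?thesis by (rule uniq)
      qed
    qed
    then show ?thesis unfolding N_def .
  qed
  have N_shift: "N (w + (of_int a * s + of_int b * t)) = N w - b" for w a b
  proof -
    have "R (w + (of_int a * s + of_int b * t)) = R w" by (rule R2) blast
    then obtain i i' :: int where "w + (of_int a * s + of_int b * t) + of_int i * s + of_int (N (w + (of_int a * s + of_int b * t))) * t
        = w + of_int i' * s + of_int (N w) * t"
      using N_eq by metis
    then have "of_int (a + i) * s + of_int (b + N (w + (of_int a * s + of_int b * t))) * t = of_int i' * s + of_int (N w) * t"
      by (simp add: algebra_simps)
    then have "b + N (w + (of_int a * s + of_int b * t)) = N w" by (rule uniq)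
    then show ?thesis by simp
  qed
  have Ns: "N (w + s) = N w" for w using N_shift[of w 1 0] by simp
  have Nt: "N (w + t) = N w - 1" for w using N_shift[of w 0 1] by simp
  define A where "A = (\<Sum>j<d. sg (N (l j)))"
  have Aodd: "odd A" unfolding A_def using d by (subst odd_pm_sum) (auto simp: sg_pm)
  have H1: "(\<Sum>j<d. of_int (sg (N (l j))) + of_int (sg (N (l j + s)))) = (\<Sum>j<d. of_int (sg (N (lb j))) + (of_int (sg (N (lb j + t))) :: real))"
    by (rule H)
  have "(\<Sum>j<d. of_int (sg (N (l j))) + of_int (sg (N (l j + s)))) = (2::real) * of_int A"
    unfolding A_def by (simp add: Ns sum_distrib_left)
  moreover have "(\<Sum>j<d. of_int (sg (N (lb j))) + (of_int (sg (N (lb j + t))) :: real)) = 0"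
    using sg_diff[of _ 1] by (simp add: Nt)
  ultimately have "A = 0" using H1 by simp
  then show ?thesis using Aodd by simp
qed

lemma schmidt_schm:
  assumes "schmidt_sq n C p"
  obtains U V where "unitary n U" "unitary n V" "schm n C U (\<lambda>k. sqrt (p k)) V"
  using assms unfolding schmidt_sq_def schm_def by blast

lemma LU_power_sums:
  assumes S1: "schm n C A \<sigma> B" "unitary n A" "unitary n B"
    and S2: "schm n C' A' \<sigma>' B'" "unitary n A'" "unitary n B'"
    and UA: "unitary n UA" and UB: "unitary n UB"
    and L: "\<forall>r<n. \<forall>c<n. local_apply n n UA UB C r c = C' r c"
    and k: "k \<ge> 1"
  shows "(\<Sum>l<n. ((\<sigma> l)\<^sup>2) ^ k) = (\<Sum>l<n. ((\<sigma>' l)\<^sup>2) ^ k)"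
proof -
  have S3: "schm n C' (mm n UA A) \<sigma> (mm n UB B)" by (rule lu_schm[OF S1(1) L])
  have "(\<Sum>l<n. complex_of_real ((\<sigma> l)\<^sup>2) ^ k) = tr n (mp n (gram n C') k)"
    by (rule power_sum_schm[OF S3 unitary_mm[OF UA S1(2)] unitary_mm[OF UB S1(3)] k, symmetric])
  also have "\<dots> = (\<Sum>l<n. complex_of_real ((\<sigma>' l)\<^sup>2) ^ k)"
    by (rule power_sum_schm[OF S2 k])
  finally have "complex_of_real (\<Sum>l<n. ((\<sigma> l)\<^sup>2) ^ k) = complex_of_real (\<Sum>l<n. ((\<sigma>' l)\<^sup>2) ^ k)"
    by simp
  then show ?thesis by (simp only: of_real_eq_iff)
qed

lemma forward:
  fixes mu mubar lam lambar UA UB :: cmat and a abar :: real and d :: nat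
  assumes a: "0 < a" "a < 1" "0 < abar" "abar < 1" "a > abar"
    and mu: "schmidt_sq 2 mu (\<lambda>k. if k = 0 then 1 / (1 + a) else a / (1 + a))"
    and mub: "schmidt_sq 2 mubar (\<lambda>k. if k = 0 then 1 / (1 + abar) else abar / (1 + abar))"
    and d: "odd d"
    and lam: "full_schmidt_rank d lam" and lamb: "full_schmidt_rank d lambar"
    and UA: "unitary (2 * d) UA" and UB: "unitary (2 * d) UB"
    and L: "\<forall>r < 2 * d. \<forall>c < 2 * d.
               local_apply (2 * d) (2 * d) UA UB (kron d mu lam) r c = kron d mubar lambar r c"
  shows "\<exists>d1 d2 :: nat. odd d1 \<and> odd d2 \<and> d \<ge> d1 \<and> d1 > d2 \<and> d2 \<ge> 1 \<and>
            abar = a powr (real d1 / real d2)"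
proof -
  define P where "P = (\<lambda>k::nat. if k = 0 then 1 / (1 + a) else a / (1 + a))"
  define Pb where "Pb = (\<lambda>k::nat. if k = 0 then 1 / (1 + abar) else abar / (1 + abar))"
  obtain U1 V1 where U1: "unitary 2 U1" "unitary 2 V1" "schm 2 mu U1 (\<lambda>k. sqrt (P k)) V1"
    using mu unfolding P_def by (rule schmidt_schm)
  obtain U1b V1b where U1b: "unitary 2 U1b" "unitary 2 V1b" "schm 2 mubar U1b (\<lambda>k. sqrt (Pb k)) V1b"
    using mub unfolding Pb_def by (rule schmidt_schm)
  obtain q where q: "schmidt_sq d lam q" "\<forall>k<d. q k > 0" using lam unfolding full_schmidt_rank_def by blast
  obtain qb where qb: "schmidt_sq d lambar qb" "\<forall>k<d. qb k > 0" using lamb unfolding full_schmidt_rank_def by blast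
  obtain U2 V2 where U2: "unitary d U2" "unitary d V2" "schm d lam U2 (\<lambda>k. sqrt (q k)) V2"
    using q(1) by (rule schmidt_schm)
  obtain U2b V2b where U2b: "unitary d U2b" "unitary d V2b" "schm d lambar U2b (\<lambda>k. sqrt (qb k)) V2b"
    using qb(1) by (rule schmidt_schm)
  define \<sigma> where "\<sigma> K = sqrt (P (K div d)) * sqrt (q (K mod d))" for K
  define \<sigma>b where "\<sigma>b K = sqrt (Pb (K div d)) * sqrt (qb (K mod d))" for K
  have S: "schm (2*d) (kron d mu lam) (kronm d U1 U2) \<sigma> (kronm d V1 V2)"
    unfolding \<sigma>_def by (rule kron_schm[OF U1(3) U2(3)])
  have Sb: "schm (2*d) (kron d mubar lambar) (kronm d U1b U2b) \<sigma>b (kronm d V1b V2b)"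
    unfolding \<sigma>b_def by (rule kron_schm[OF U1b(3) U2b(3)])
  have d0: "d > 0" using d by (cases d) auto
  have P0: "P i > 0" for i using a unfolding P_def by auto
  have Pb0: "Pb i > 0" for i using a unfolding Pb_def by auto
  have sq: "(\<sigma> K)\<^sup>2 = P (K div d) * q (K mod d)" if "K < 2*d" for K
    using P0[of "K div d"] q(2)[rule_format, of "K mod d"] d0 unfolding \<sigma>_def by (simp add: power_mult_distrib)
  have sqb: "(\<sigma>b K)\<^sup>2 = Pb (K div d) * qb (K mod d)" if "K < 2*d" for K
    using Pb0[of "K div d"] qb(2)[rule_format, of "K mod d"] d0 unfolding \<sigma>b_def by (simp add: power_mult_distrib)
  have PS: "(\<Sum>K<2*d. (P (K div d) * q (K mod d)) ^ k) = (\<Sum>K<2*d. (Pb (K div d) * qb (K mod d)) ^ k)" if k: "k \<ge> 1" for k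
  proof -
    have "(\<Sum>K<2*d. (P (K div d) * q (K mod d)) ^ k) = (\<Sum>K<2*d. ((\<sigma> K)\<^sup>2) ^ k)"
      by (rule sum.cong) (auto simp: sq)
    also have "\<dots> = (\<Sum>K<2*d. ((\<sigma>b K)\<^sup>2) ^ k)"
      by (rule LU_power_sums[OF S unitary_kron[OF U1(1) U2(1)] unitary_kron[OF U1(2) U2(2)]
            Sb unitary_kron[OF U1b(1) U2b(1)] unitary_kron[OF U1b(2) U2b(2)] UA UB L k])
    also have "\<dots> = (\<Sum>K<2*d. (Pb (K div d) * qb (K mod d)) ^ k)"
      by (rule sum.cong) (auto simp: sqb)
    finally show ?thesis .
  qed
  have pos1: "\<forall>K\<in>{..<2*d}. P (K div d) * q (K mod d) > 0" using P0 q(2) d0 by auto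
  have pos2: "\<forall>K\<in>{..<2*d}. Pb (K div d) * qb (K mod d) > 0" using Pb0 qb(2) d0 by auto
  have HU: "(\<Sum>K<2*d. h (P (K div d) * q (K mod d))) = (\<Sum>K<2*d. h (Pb (K div d) * qb (K mod d)))" for h :: "real \<Rightarrow> real"
    using ps_unique[where I="{..<2*d}" and J="{..<2*d}" and u="\<lambda>K. P (K div d) * q (K mod d)"
        and v="\<lambda>K. Pb (K div d) * qb (K mod d)" and h=h] pos1 pos2 PS by auto
  define l where "l j = - ln (q j / (1 + a))" for j
  define lb where "lb j = - ln (qb j / (1 + abar))" for j
  define s where "s = - ln a"
  define t where "t = - ln abar"
  have s0: "0 < s" using a unfolding s_def by simp
  have st: "s < t" using a unfolding s_def t_def by simp
  have H: "(\<Sum>j<d. g (l j) + g (l j + s)) = (\<Sum>j<d. g (lb j) + g (lb j + t))" for g :: "real \<Rightarrow> real"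
  proof -
    have "(\<Sum>j<d. g (l j) + g (l j + s)) = (\<Sum>K<2*d. g (- ln (P (K div d) * q (K mod d))))"
    proof -
      have "(\<Sum>K<2*d. g (- ln (P (K div d) * q (K mod d)))) = (\<Sum>k<2. \<Sum>j<d. g (- ln (P ((k*d+j) div d) * q ((k*d+j) mod d))))"
        by (rule sum_split_prod)
      also have "\<dots> = (\<Sum>j<d. g (- ln (P 0 * q j)) + g (- ln (P 1 * q j)))"
        by (simp add: numeral_2_eq_2 sum.distrib)
      also have "\<dots> = (\<Sum>j<d. g (l j) + g (l j + s))"
      proof (rule sum.cong[OF refl])
        fix j assume "j \<in> {..<d}"
        then have qj: "q j > 0" using q(2) by auto
        have P1: "P 1 * q j = a * (q j / (1 + a))" unfolding P_def by simp
        have lneq: "ln (a * (q j / (1 + a))) = ln a + ln (q j / (1 + a))"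
          by (rule ln_mult_pos) (use qj a in auto)
        have "- ln (P 1 * q j) = l j + s" unfolding l_def s_def by (simp only: P1 lneq, simp?)
        moreover have "- ln (P 0 * q j) = l j" unfolding P_def l_def by simp
        ultimately show "g (- ln (P 0 * q j)) + g (- ln (P 1 * q j)) = g (l j) + g (l j + s)" by simp
      qed
      finally show ?thesis by simp
    qed
    also have "\<dots> = (\<Sum>K<2*d. g (- ln (Pb (K div d) * qb (K mod d))))"
      by (rule HU)
    also have "\<dots> = (\<Sum>j<d. g (lb j) + g (lb j + t))"
    proof -
      have "(\<Sum>K<2*d. g (- ln (Pb (K div d) * qb (K mod d)))) = (\<Sum>k<2. \<Sum>j<d. g (- ln (Pb ((k*d+j) div d) * qb ((k*d+j) mod d))))"
        by (rule sum_split_prod)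
      also have "\<dots> = (\<Sum>j<d. g (- ln (Pb 0 * qb j)) + g (- ln (Pb 1 * qb j)))"
        by (simp add: numeral_2_eq_2 sum.distrib)
      also have "\<dots> = (\<Sum>j<d. g (lb j) + g (lb j + t))"
      proof (rule sum.cong[OF refl])
        fix j assume "j \<in> {..<d}"
        then have qj: "qb j > 0" using qb(2) by auto
        have P1: "Pb 1 * qb j = abar * (qb j / (1 + abar))" unfolding Pb_def by simp
        have lneq: "ln (abar * (qb j / (1 + abar))) = ln abar + ln (qb j / (1 + abar))"
          by (rule ln_mult_pos) (use qj a in auto)
        have "- ln (Pb 1 * qb j) = lb j + t" unfolding lb_def t_def by (simp only: P1 lneq, simp?)
        moreover have "- ln (Pb 0 * qb j) = lb j" unfolding Pb_def lb_def by simp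
        ultimately show "g (- ln (Pb 0 * qb j)) + g (- ln (Pb 1 * qb j)) = g (lb j) + g (lb j + t)" by simp
      qed
      finally show ?thesis .
    qed
    finally show ?thesis .
  qed
  obtain p q' :: nat where pq: "odd p" "odd q'" "q' \<le> d" "p < q'" "p \<ge> 1" "t = s * q' / p"
    using nt_main[OF s0 st d H] by blast
  have "ln abar = ln a * (real q' / real p)" using pq(6) unfolding s_def t_def by simp
  then have "abar = a powr (real q' / real p)"
    using a by (simp add: powr_def) (metis exp_ln mult.commute)
  then show ?thesis using pq by blast
qed

definition AP :: "nat \<Rightarrow> nat \<Rightarrow> nat multiset" where
  "AP a n = mset (map (\<lambda>i. a + 2*i) [0..<n])"

lemma AP_add: "AP a (n + m) = AP a n + AP (a + 2*n) m"
  unfolding AP_def by (induction m) (auto simp: algebra_simps)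

lemma AP_shift: "image_mset (\<lambda>x. x + c) (AP a n) = AP (a + c) n"
  unfolding AP_def by (simp add: multiset.map_comp comp_def algebra_simps)

definition Xs :: "nat \<Rightarrow> nat \<Rightarrow> nat list" where
  "Xs q m = map (\<lambda>i. 2*i) [0..<q] @ replicate m 0 @ replicate m q"
definition Ys :: "nat \<Rightarrow> nat \<Rightarrow> nat \<Rightarrow> nat list" where
  "Ys p q m = (let r = (q - p) div 2 in
     map (\<lambda>i. 2*i) [0..<p] @ map (\<lambda>i. p + 2*i) [0..<r] @ map (\<lambda>i. 2*p + 2*i) [0..<r]
     @ replicate m 0 @ replicate m p)"

lemma len_Xs: "length (Xs q m) = q + 2*m" unfolding Xs_def by simp
lemma len_Ys: "odd p \<Longrightarrow> odd q \<Longrightarrow> p \<le> q \<Longrightarrow> length (Ys p q m) = q + 2*m"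
  unfolding Ys_def Let_def by simp presburger

lemma times2: "(\<lambda>i::nat. i * 2) = (*) 2" by auto

lemma XY_mset:
  assumes "odd p" "odd q" "p \<le> q"
  shows "mset (Xs q m @ map (\<lambda>x. x + p) (Xs q m)) = mset (Ys p q m @ map (\<lambda>y. y + q) (Ys p q m))"
proof -
  define r where "r = (q - p) div 2"
  have q: "q = p + 2*r" unfolding r_def using assms by presburger
  have X0: "mset (map (\<lambda>i. 2*i) [0..<n]) = AP 0 n" for n unfolding AP_def by simp
  have X1: "mset (map (\<lambda>i. c + 2*i) [0..<n]) = AP c n" for c n unfolding AP_def by simp
  have shift: "mset (map (\<lambda>x. x + c) xs) = image_mset (\<lambda>x. x + c) (mset xs)" for c xs by simp
  have L: "mset (Xs q m @ map (\<lambda>x. x + p) (Xs q m)) =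
      AP 0 q + AP p q + replicate_mset m 0 + replicate_mset m q + replicate_mset m p + replicate_mset m (q + p)"
    unfolding Xs_def by (simp add: AP_def multiset.map_comp comp_def add_ac algebra_simps times2)
  have R: "mset (Ys p q m @ map (\<lambda>y. y + q) (Ys p q m)) =
      AP 0 p + AP p r + AP (2*p) r + AP q p + AP (p + q) r + AP (2*p + q) r
      + replicate_mset m 0 + replicate_mset m p + replicate_mset m q + replicate_mset m (p + q)"
    unfolding Ys_def Let_def r_def[symmetric]
    by (simp add: AP_def multiset.map_comp comp_def add_ac algebra_simps times2)
  have rr: "AP (2*p) (2*r) = AP (2*p) r + AP (2*p+2*r) r"
    using AP_add[of "2*p" r r] by (simp add: mult_2)
  have "AP 0 q = AP 0 p + AP (2*p) r + AP (p + q) r"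
    using AP_add[of 0 p "2*r"] rr q by (simp add: algebra_simps)
  moreover have "AP p q = AP p r + AP q p + AP (2*p + q) r"
  proof -
    have e: "q = r + (p + r)" using q by simp
    show ?thesis unfolding e AP_add using AP_add[of "p + 2*r" p r] q by (simp add: algebra_simps mult_2_right)
  qed
  ultimately show ?thesis using L R by (simp add: add_ac)
qed

definition adjm :: "cmat \<Rightarrow> cmat" where "adjm U = (\<lambda>i j. cnj (U j i))"

lemma unitary_adj:
  assumes U: "unitary n U"
  shows "unitary n (adjm U)"
proof -
  define M where "M = mat n n (\<lambda>(i,j). U i j)"
  define Mh where "Mh = mat n n (\<lambda>(i,j). cnj (U j i))"
  have M: "M \<in> carrier_mat n n" and Mh: "Mh \<in> carrier_mat n n" unfolding M_def Mh_def by auto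
  have "Mh * M = 1\<^sub>m n"
  proof (rule eq_matI)
    fix i j assume i: "i < dim_row (1\<^sub>m n :: complex mat)" and j: "j < dim_col (1\<^sub>m n :: complex mat)"
    then have "i < n" "j < n" by auto
    then have "(Mh * M) $$ (i, j) = (\<Sum>k<n. cnj (U k i) * U k j)"
      unfolding M_def Mh_def by (simp add: scalar_prod_def lessThan_atLeast0)
    also have "\<dots> = (1\<^sub>m n :: complex mat) $$ (i, j)"
      using U \<open>i < n\<close> \<open>j < n\<close> unfolding unitary_def by simp
    finally show "(Mh * M) $$ (i, j) = (1\<^sub>m n :: complex mat) $$ (i, j)" .
  qed (auto simp: M_def Mh_def)
  then have MMh: "M * Mh = 1\<^sub>m n" by (rule mat_mult_left_right_inverse[OF Mh M])
  show ?thesis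
    unfolding unitary_def
  proof (intro allI impI)
    fix i j assume i: "i < n" and j: "j < n"
    have "(\<Sum>k<n. cnj (adjm U k i) * adjm U k j) = (M * Mh) $$ (i, j)"
      unfolding M_def Mh_def adjm_def using i j by (simp add: scalar_prod_def lessThan_atLeast0)
    also have "\<dots> = (if i = j then 1 else 0)" using MMh i j by simp
    finally show "(\<Sum>k<n. cnj (adjm U k i) * adjm U k j) = (if i = j then 1 else 0)" .
  qed
qed

definition dg :: "(nat \<Rightarrow> real) \<Rightarrow> cmat" where
  "dg f = (\<lambda>i j. if i = j then complex_of_real (sqrt (f i)) else 0)"

lemma unitary_idm: "unitary n idm"
  unfolding unitary_def
proof (intro allI impI)
  fix i j assume i: "i < n" and j: "j < n"
  have "(\<Sum>k<n. cnj (idm k i) * idm k j) = (\<Sum>k<n. if k = i then (if i = j then 1 else 0) else 0)"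
    unfolding idm_def by (intro sum.cong) auto
  also have "\<dots> = (if i = j then 1 else 0)" using i by (simp add: sum.delta)
  finally show "(\<Sum>k<n. cnj (idm k i) * idm k j) = (if i = j then 1 else 0)" .
qed

lemma dg_schm: "schm d (dg f) idm (\<lambda>k. sqrt (f k)) idm"
  unfolding schm_def dg_def idm_def by (auto simp: if_distrib[of "\<lambda>x. x * _"] sum.delta cong: if_cong)

lemma dg_state:
  assumes "\<forall>k<d. f k \<ge> 0" "(\<Sum>k<d. f k) = 1"
  shows "is_state d d (dg f)"
proof -
  have "(\<Sum>i<d. \<Sum>j<d. (cmod (dg f i j))\<^sup>2) = (\<Sum>i<d. f i)"
  proof (rule sum.cong[OF refl])
    fix i assume i: "i \<in> {..<d}"
    have "(\<Sum>j<d. (cmod (dg f i j))\<^sup>2) = (\<Sum>j<d. if i = j then f i else 0)"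
      using assms(1) i by (intro sum.cong refl) (auto simp: dg_def)
    also have "\<dots> = f i" using i by (simp add: sum.delta)
    finally show "(\<Sum>j<d. (cmod (dg f i j))\<^sup>2) = f i" .
  qed
  then show ?thesis unfolding is_state_def using assms(2) by simp
qed

lemma dg_full:
  assumes "\<forall>k<d. f k > 0"
  shows "full_schmidt_rank d (dg f)"
  unfolding full_schmidt_rank_def schmidt_sq_def
  using assms dg_schm[of d f] unitary_idm[of d] unfolding schm_def
  by (intro exI[of _ f]) (auto intro!: exI[of _ idm])

lemma list_E:
  assumes "length xs = d"
  shows "map (\<lambda>K. c * (K div d) + xs ! (K mod d)) [0..<2*d] = xs @ map (\<lambda>x. x + c) xs"
proof -
  have "[0..<2*d] = [0..<d] @ map (\<lambda>i. i + d) [0..<d]"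
    using upt_add_eq_append[of 0 d d] map_add_upt[of d d] by (simp add: mult_2)
  moreover have "map (\<lambda>K. c * (K div d) + xs ! (K mod d)) [0..<d] = xs"
  proof -
    have "map (\<lambda>K. c * (K div d) + xs ! (K mod d)) [0..<d] = map (\<lambda>K. xs ! K) [0..<length xs]"
      using assms by (intro map_cong) auto
    then show ?thesis by (simp add: map_nth)
  qed
  moreover have "map (\<lambda>K. c * (K div d) + xs ! (K mod d)) (map (\<lambda>i. i + d) [0..<d]) = map (\<lambda>x. x + c) xs"
  proof -
    have "map (\<lambda>K. c * (K div d) + xs ! (K mod d)) (map (\<lambda>i. i + d) [0..<d]) = map (\<lambda>x. x + c) (map (\<lambda>K. xs ! K) [0..<length xs])"
      using assms by (auto simp: add.commute)
    then show ?thesis by (simp add: map_nth)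
  qed
  ultimately show ?thesis by simp
qed

lemma unitary_Q:
  assumes \<pi>: "\<pi> permutes {..<n}"
  shows "unitary n (\<lambda>k K. if \<pi> k = K then 1 else 0)"
  unfolding unitary_def
proof (intro allI impI)
  fix i j assume i: "i < n" and j: "j < n"
  define g where "g K = (if K = i then 1 else 0) * (if K = j then (1::complex) else 0)" for K
  have "(\<Sum>k<n. cnj (if \<pi> k = i then 1 else 0) * (if \<pi> k = j then (1::complex) else 0)) = (\<Sum>k<n. (g \<circ> \<pi>) k)"
    unfolding g_def by (intro sum.cong) auto
  also have "\<dots> = (\<Sum>K<n. g K)" by (rule sum.permute[OF \<pi>, symmetric])
  also have "\<dots> = (if i = j then 1 else 0)" unfolding g_def using i by (simp add: sum.delta if_distrib[of "\<lambda>x. x * _"] cong: if_cong)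
  finally show "(\<Sum>k<n. cnj (if \<pi> k = i then 1 else 0) * (if \<pi> k = j then (1::complex) else 0)) = (if i = j then 1 else 0)" .
qed

lemma perm_sum:
  fixes \<pi> :: "nat \<Rightarrow> nat" and n :: nat
  assumes \<pi>: "\<pi> permutes {..<n}"
  shows "(\<Sum>K<n. (\<Sum>k1<n. X k1 * (if \<pi> k1 = K then 1 else 0)) * s K * (\<Sum>k2<n. Y k2 * (if \<pi> k2 = K then 1 else 0)))
       = (\<Sum>k<n. X k * s (\<pi> k) * (Y k :: complex))"
proof -
  have inner: "(\<Sum>k1<n. Z k1 * (if \<pi> k1 = K then 1 else 0)) = Z (inv_into UNIV \<pi> K)" if K: "K < n" for K and Z :: "nat \<Rightarrow> complex"
  proof -
    have "(\<Sum>k1<n. Z k1 * (if \<pi> k1 = K then 1 else 0)) = (\<Sum>k1<n. if k1 = inv_into UNIV \<pi> K then Z k1 else 0)"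
    proof (intro sum.cong refl)
      fix k1
      have "k1 = inv_into UNIV \<pi> K \<longleftrightarrow> \<pi> k1 = K" using permutes_inv_eq[OF \<pi>, of K k1] by auto
      then show "Z k1 * (if \<pi> k1 = K then 1 else 0) = (if k1 = inv_into UNIV \<pi> K then Z k1 else 0)" by simp
    qed
    also have "\<dots> = Z (inv_into UNIV \<pi> K)"
      using permutes_in_image[OF permutes_inv[OF \<pi>], of K] K by (simp add: sum.delta')
    finally show ?thesis .
  qed
  define g where "g K = X (inv_into UNIV \<pi> K) * s K * Y (inv_into UNIV \<pi> K)" for K
  have "(\<Sum>K<n. (\<Sum>k1<n. X k1 * (if \<pi> k1 = K then 1 else 0)) * s K * (\<Sum>k2<n. Y k2 * (if \<pi> k2 = K then 1 else 0)))
      = (\<Sum>K<n. g K)" unfolding g_def by (intro sum.cong refl) (simp add: inner)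
  also have "\<dots> = (\<Sum>k<n. (g \<circ> \<pi>) k)" by (rule sum.permute[OF \<pi>])
  also have "\<dots> = (\<Sum>k<n. X k * s (\<pi> k) * Y k)"
    unfolding g_def by (simp add: permutes_inverses[OF \<pi>])
  finally show ?thesis .
qed

lemma mm_assoc: "mm n (mm n X Y) Z = mm n X (mm n Y Z)"
  unfolding mm_def
proof (intro ext)
  fix i j
  show "(\<Sum>k<n. (\<Sum>l<n. X i l * Y l k) * Z k j) = (\<Sum>l<n. X i l * (\<Sum>k<n. Y l k * Z k j))"
    by (simp add: sum_distrib_left sum_distrib_right mult.assoc) (rule sum.swap)
qed

lemma mm_UA_A:
  assumes A: "unitary n A" and K: "K < n"
  shows "mm n (mm n X (mm n Q (adjm A))) A r K = mm n X Q r K"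
proof -
  have AA: "mm n (adjm A) A l K = idm l K" if "l < n" for l
    using unitaryD[OF A that K] unfolding mm_def adjm_def idm_def by simp
  have QA: "mm n Q (mm n (adjm A) A) k K = Q k K" for k
  proof -
    have "mm n Q (mm n (adjm A) A) k K = (\<Sum>l<n. Q k l * idm l K)"
      unfolding mm_def[of n Q] using AA by (intro sum.cong) auto
    also have "\<dots> = Q k K" using K by (simp add: idm_def if_distrib[of "\<lambda>x. _ * x"] sum.delta' cong: if_cong)
    finally show ?thesis .
  qed
  show ?thesis unfolding mm_assoc by (simp add: mm_def[of n X] QA)
qed

lemma backward:
  fixes mu mubar :: cmat and a abar :: real and d d1 d2 :: nat
  assumes a: "0 < a" "a < 1"
    and mu: "schmidt_sq 2 mu (\<lambda>k. if k = 0 then 1 / (1 + a) else a / (1 + a))"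
    and mub: "schmidt_sq 2 mubar (\<lambda>k. if k = 0 then 1 / (1 + abar) else abar / (1 + abar))"
    and d: "odd d" and dd: "odd d1" "odd d2" "d \<ge> d1" "d1 > d2" "d2 \<ge> 1"
    and ab: "abar = a powr (real d1 / real d2)"
  shows "\<exists>lam lambar UA UB.
            is_state d d lam \<and> is_state d d lambar \<and>
            full_schmidt_rank d lam \<and> full_schmidt_rank d lambar \<and>
            unitary (2 * d) UA \<and> unitary (2 * d) UB \<and>
            (\<forall>r < 2 * d. \<forall>c < 2 * d.
               local_apply (2 * d) (2 * d) UA UB (kron d mu lam) r c = kron d mubar lambar r c)"
proof -
  define p where "p = d2"
  define q where "q = d1"
  have pq: "odd p" "odd q" "p < q" "p \<ge> 1" "q \<le> d" using dd unfolding p_def q_def by auto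
  define m where "m = (d - q) div 2"
  have dm: "d = q + 2*m" using d pq unfolding m_def by presburger
  have d0: "d > 0" using pq by simp
  define \<tau> where "\<tau> = a powr (1 / real p)"
  have \<tau>0: "\<tau> > 0" unfolding \<tau>_def using a by simp
  have \<tau>p: "\<tau> ^ p = a"
  proof -
    have "\<tau> ^ p = \<tau> powr real p" using \<tau>0 by (simp add: powr_realpow)
    also have "\<dots> = a" unfolding \<tau>_def using a pq by (simp add: powr_powr)
    finally show ?thesis .
  qed
  have \<tau>q: "\<tau> ^ q = abar"
  proof -
    have "\<tau> ^ q = \<tau> powr real q" using \<tau>0 by (simp add: powr_realpow)
    also have "\<dots> = abar" unfolding \<tau>_def ab p_def q_def using a by (simp add: powr_powr)
    finally show ?thesis .
  qed
  have ab0: "abar > 0" using ab a by simp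
  define xs where "xs = Xs q m"
  define ys where "ys = Ys p q m"
  have lx: "length xs = d" unfolding xs_def using len_Xs dm by simp
  have ly: "length ys = d" unfolding ys_def using len_Ys[of p q m] pq dm by simp
  define Z where "Z = sum_list (map (\<lambda>x. \<tau> ^ x) xs)"
  define Zb where "Zb = sum_list (map (\<lambda>x. \<tau> ^ x) ys)"
  have Zsum: "Z = (\<Sum>j<d. \<tau> ^ (xs ! j))"
    unfolding Z_def sum_list_sum_nth using lx by (simp add: atLeast0LessThan)
  have Zbsum: "Zb = (\<Sum>j<d. \<tau> ^ (ys ! j))"
    unfolding Zb_def sum_list_sum_nth using ly by (simp add: atLeast0LessThan)
  have Z0: "Z > 0" unfolding Zsum using d0 \<tau>0 by (intro sum_pos) auto
  have Zb0: "Zb > 0" unfolding Zbsum using d0 \<tau>0 by (intro sum_pos) auto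
  define qv where "qv j = \<tau> ^ (xs ! j) / Z" for j
  define qbv where "qbv j = \<tau> ^ (ys ! j) / Zb" for j
  have qv0: "\<forall>k<d. qv k > 0" unfolding qv_def using Z0 \<tau>0 by simp
  have qbv0: "\<forall>k<d. qbv k > 0" unfolding qbv_def using Zb0 \<tau>0 by simp
  have qv1: "(\<Sum>k<d. qv k) = 1" unfolding qv_def using Z0 by (simp add: sum_divide_distrib[symmetric] Zsum)
  have qbv1: "(\<Sum>k<d. qbv k) = 1" unfolding qbv_def using Zb0 by (simp add: sum_divide_distrib[symmetric] Zbsum)
  define lam where "lam = dg qv"
  define lambar where "lambar = dg qbv"
  define P where "P = (\<lambda>k::nat. if k = 0 then 1 / (1 + a) else a / (1 + a))"
  define Pb where "Pb = (\<lambda>k::nat. if k = 0 then 1 / (1 + abar) else abar / (1 + abar))"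
  obtain U1 V1 where U1: "unitary 2 U1" "unitary 2 V1" "schm 2 mu U1 (\<lambda>k. sqrt (P k)) V1"
    using mu unfolding P_def by (rule schmidt_schm)
  obtain U1b V1b where U1b: "unitary 2 U1b" "unitary 2 V1b" "schm 2 mubar U1b (\<lambda>k. sqrt (Pb k)) V1b"
    using mub unfolding Pb_def by (rule schmidt_schm)
  define \<sigma> where "\<sigma> K = sqrt (P (K div d)) * sqrt (qv (K mod d))" for K
  define \<sigma>b where "\<sigma>b K = sqrt (Pb (K div d)) * sqrt (qbv (K mod d))" for K
  define n where "n = 2 * d"
  define A where "A = kronm d U1 idm"
  define B where "B = kronm d V1 idm"
  define Ab where "Ab = kronm d U1b idm"
  define Bb where "Bb = kronm d V1b idm"
  have S: "schm n (kron d mu lam) A \<sigma> B"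
    unfolding \<sigma>_def n_def A_def B_def lam_def by (rule kron_schm[OF U1(3) dg_schm])
  have Sb: "schm n (kron d mubar lambar) Ab \<sigma>b Bb"
    unfolding \<sigma>b_def n_def Ab_def Bb_def lambar_def by (rule kron_schm[OF U1b(3) dg_schm])
  have uA: "unitary n A" "unitary n B" "unitary n Ab" "unitary n Bb"
    unfolding n_def A_def B_def Ab_def Bb_def
    by (intro unitary_kron U1 U1b unitary_idm)+
  define E where "E K = p * (K div d) + xs ! (K mod d)" for K
  define Eb where "Eb K = q * (K div d) + ys ! (K mod d)" for K
  define N where "N = (1 + a) * Z"
  define Nb where "Nb = (1 + abar) * Zb"
  have Kcases: "K div d = 0 \<or> K div d = 1" if "K < n" for K
    using that unfolding n_def by (simp add: less_mult_imp_div_less) (metis One_nat_def less_2_cases less_mult_imp_div_less mult.commute)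
  have \<sigma>E: "\<sigma> K = sqrt (\<tau> ^ (E K) / N)" if K: "K < n" for K
  proof -
    have Pnn: "P i \<ge> 0" for i unfolding P_def using a by auto
    have "\<sigma> K = sqrt (P (K div d) * qv (K mod d))" unfolding \<sigma>_def by (simp add: real_sqrt_mult)
    also have "P (K div d) * qv (K mod d) = \<tau> ^ (E K) / N"
      using Kcases[OF K] unfolding P_def qv_def E_def N_def
      by (auto simp: power_add \<tau>p field_simps)
    finally show ?thesis .
  qed
  have \<sigma>bE: "\<sigma>b K = sqrt (\<tau> ^ (Eb K) / Nb)" if K: "K < n" for K
  proof -
    have "\<sigma>b K = sqrt (Pb (K div d) * qbv (K mod d))" unfolding \<sigma>b_def by (simp add: real_sqrt_mult)
    also have "Pb (K div d) * qbv (K mod d) = \<tau> ^ (Eb K) / Nb"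
      using Kcases[OF K] unfolding Pb_def qbv_def Eb_def Nb_def
      by (auto simp: power_add \<tau>q field_simps)
    finally show ?thesis .
  qed
  have MS: "mset (xs @ map (\<lambda>x. x + p) xs) = mset (ys @ map (\<lambda>y. y + q) ys)"
    unfolding xs_def ys_def by (rule XY_mset) (use pq in auto)
  have sl_ms: "sum_list (map f L) = sum_mset (image_mset f (mset L))" for f :: "nat \<Rightarrow> real" and L
    by (metis mset_map sum_mset_sum_list)
  have N_eq: "N = sum_list (map (\<lambda>x. \<tau> ^ x) (xs @ map (\<lambda>x. x + p) xs))"
    unfolding N_def Z_def by (simp add: power_add \<tau>p sum_list_const_mult algebra_simps comp_def)
  have Nb_eq: "Nb = sum_list (map (\<lambda>x. \<tau> ^ x) (ys @ map (\<lambda>x. x + q) ys))"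
    unfolding Nb_def Zb_def by (simp add: power_add \<tau>q sum_list_const_mult algebra_simps comp_def)
  have NNb: "N = Nb" unfolding N_eq Nb_eq sl_ms MS ..
  define g where "g e = sqrt (\<tau> ^ e / N)" for e
  have ms\<sigma>: "mset (map \<sigma>b [0..<n]) = mset (map \<sigma> [0..<n])"
  proof -
    have "map \<sigma> [0..<n] = map g (map E [0..<n])" unfolding g_def using \<sigma>E by simp
    also have "map E [0..<n] = xs @ map (\<lambda>x. x + p) xs" unfolding E_def n_def by (rule list_E[OF lx])
    finally have "map \<sigma> [0..<n] = map g (xs @ map (\<lambda>x. x + p) xs)" .
    then have 1: "mset (map \<sigma> [0..<n]) = image_mset g (mset (xs @ map (\<lambda>x. x + p) xs))" by (simp only: mset_map)
    have "map \<sigma>b [0..<n] = map g (map Eb [0..<n])" unfolding g_def using \<sigma>bE NNb by simp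
    also have "map Eb [0..<n] = ys @ map (\<lambda>x. x + q) ys" unfolding Eb_def n_def by (rule list_E[OF ly])
    finally have "map \<sigma>b [0..<n] = map g (ys @ map (\<lambda>x. x + q) ys)" .
    then have 2: "mset (map \<sigma>b [0..<n]) = image_mset g (mset (ys @ map (\<lambda>x. x + q) ys))" by (simp only: mset_map)
    show ?thesis unfolding 1 2 MS ..
  qed
  obtain \<pi> where \<pi>: "\<pi> permutes {..<length (map \<sigma> [0..<n])}" and \<pi>l: "permute_list \<pi> (map \<sigma> [0..<n]) = map \<sigma>b [0..<n]"
    by (rule mset_eq_permutation[OF ms\<sigma>])
  have \<pi>n: "\<pi> permutes {..<n}" using \<pi> by simp
  have \<sigma>\<pi>: "\<sigma>b K = \<sigma> (\<pi> K)" if K: "K < n" for K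
  proof -
    have "\<sigma>b K = permute_list \<pi> (map \<sigma> [0..<n]) ! K" using \<pi>l K by simp
    also have "\<dots> = map \<sigma> [0..<n] ! \<pi> K" by (rule permute_list_nth[OF \<pi>]) (use K in simp)
    also have "\<dots> = \<sigma> (\<pi> K)" using permutes_in_image[OF \<pi>n, of K] K by simp
    finally show ?thesis .
  qed
  define Q :: cmat where "Q = (\<lambda>k K. if \<pi> k = K then 1 else 0)"
  define UA where "UA = mm n Ab (mm n Q (adjm A))"
  define UB where "UB = mm n Bb (mm n Q (adjm B))"
  have uQ: "unitary n Q" unfolding Q_def by (rule unitary_Q[OF \<pi>n])
  have uUA: "unitary n UA" unfolding UA_def by (intro unitary_mm uA uQ unitary_adj)
  have uUB: "unitary n UB" unfolding UB_def by (intro unitary_mm uA uQ unitary_adj)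
  have Sl: "schm n (local_apply n n UA UB (kron d mu lam)) (mm n UA A) \<sigma> (mm n UB B)"
    by (rule lu_schm[OF S]) simp
  have main: "local_apply n n UA UB (kron d mu lam) r c = kron d mubar lambar r c" if r: "r < n" and c: "c < n" for r c
  proof -
    have "local_apply n n UA UB (kron d mu lam) r c = (\<Sum>K<n. mm n UA A r K * complex_of_real (\<sigma> K) * mm n UB B c K)"
      using Sl r c unfolding schm_def by blast
    also have "\<dots> = (\<Sum>K<n. mm n Ab Q r K * complex_of_real (\<sigma> K) * mm n Bb Q c K)"
      unfolding UA_def UB_def by (intro sum.cong refl) (simp add: mm_UA_A uA)
    also have "\<dots> = (\<Sum>k<n. Ab r k * complex_of_real (\<sigma> (\<pi> k)) * Bb c k)"
      unfolding mm_def Q_def by (rule perm_sum[OF \<pi>n])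
    also have "\<dots> = (\<Sum>k<n. Ab r k * complex_of_real (\<sigma>b k) * Bb c k)"
      by (intro sum.cong refl) (simp add: \<sigma>\<pi>)
    also have "\<dots> = kron d mubar lambar r c" using Sb r c unfolding schm_def by simp
    finally show ?thesis .
  qed
  have st1: "is_state d d (dg qv)" by (rule dg_state) (use qv0 qv1 in auto)
  have st2: "is_state d d (dg qbv)" by (rule dg_state) (use qbv0 qbv1 in auto)
  show ?thesis
    apply (rule exI[of _ lam], rule exI[of _ lambar], rule exI[of _ UA], rule exI[of _ UB])
    using st1 st2 qv0 qbv0 qv1 qbv1 dg_full[OF qv0] dg_full[OF qbv0]
      uUA uUB main unfolding lam_def lambar_def n_def by auto
qed

theorem theorem6:
  fixes mu mubar :: cmat and a abar :: real and d :: nat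
  assumes "0 < a" "a < 1" "0 < abar" "abar < 1" "a > abar"
    and "schmidt_sq 2 mu (\<lambda>k. if k = 0 then 1 / (1 + a) else a / (1 + a))"
    and "schmidt_sq 2 mubar (\<lambda>k. if k = 0 then 1 / (1 + abar) else abar / (1 + abar))"
    and "odd d" "d \<ge> 3"
  shows "(\<exists>lam lambar UA UB.
            is_state d d lam \<and> is_state d d lambar \<and>
            full_schmidt_rank d lam \<and> full_schmidt_rank d lambar \<and>
            unitary (2 * d) UA \<and> unitary (2 * d) UB \<and>
            (\<forall>r < 2 * d. \<forall>c < 2 * d.
               local_apply (2 * d) (2 * d) UA UB (kron d mu lam) r c = kron d mubar lambar r c))
     \<longleftrightarrow>
         (\<exists>d1 d2 :: nat. odd d1 \<and> odd d2 \<and> d \<ge> d1 \<and> d1 > d2 \<and> d2 \<ge> 1 \<and>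
            abar = a powr (real d1 / real d2))"
  proof
  assume "\<exists>lam lambar UA UB.
            is_state d d lam \<and> is_state d d lambar \<and>
            full_schmidt_rank d lam \<and> full_schmidt_rank d lambar \<and>
            unitary (2 * d) UA \<and> unitary (2 * d) UB \<and>
            (\<forall>r < 2 * d. \<forall>c < 2 * d.
               local_apply (2 * d) (2 * d) UA UB (kron d mu lam) r c = kron d mubar lambar r c)"
  then obtain lam lambar UA UB where H: "full_schmidt_rank d lam" "full_schmidt_rank d lambar"
      "unitary (2 * d) UA" "unitary (2 * d) UB"
      "\<forall>r < 2 * d. \<forall>c < 2 * d.
               local_apply (2 * d) (2 * d) UA UB (kron d mu lam) r c = kron d mubar lambar r c"
    by blast
  show "\<exists>d1 d2 :: nat. odd d1 \<and> odd d2 \<and> d \<ge> d1 \<and> d1 > d2 \<and> d2 \<ge> 1 \<and>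
            abar = a powr (real d1 / real d2)"
    by (rule forward[OF assms(1-7) assms(8) H])
next
  assume "\<exists>d1 d2 :: nat. odd d1 \<and> odd d2 \<and> d \<ge> d1 \<and> d1 > d2 \<and> d2 \<ge> 1 \<and>
            abar = a powr (real d1 / real d2)"
  then obtain d1 d2 :: nat where D: "odd d1" "odd d2" "d \<ge> d1" "d1 > d2" "d2 \<ge> 1"
      "abar = a powr (real d1 / real d2)" by blast
  show "\<exists>lam lambar UA UB.
            is_state d d lam \<and> is_state d d lambar \<and>
            full_schmidt_rank d lam \<and> full_schmidt_rank d lambar \<and>
            unitary (2 * d) UA \<and> unitary (2 * d) UB \<and>
            (\<forall>r < 2 * d. \<forall>c < 2 * d.
               local_apply (2 * d) (2 * d) UA UB (kron d mu lam) r c = kron d mubar lambar r c)"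
    by (rule backward[OF assms(1,2) assms(6,7) assms(8) D])
qed

end
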